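(* Let $m\neq 0$ and $k$ be real constants, let $\mathbf{q}_0,\mathbf{p}_0\in\mathbb{R}^3$ with $\mathbf{q}_0\neq 0$, and let $h_0>0$. Run the numerical scheme described in the context and assume that all quantities it produces are well defined for every $n\ge 0$ (all denominators nonzero). Then for every $n\ge 0$, with $q_n=|\mathbf q_n|$ and $S_n=\dfrac{h_n\,\mathbf q_n\cdot\mathbf p_n}{m\,q_n}$, $$\mathbf r_n=\mathbf q_n+\frac{h_n}{2m}\Big(\frac{S_n}{q_n+\sqrt{q_n^2+S_n^2}}-1\Big)\mathbf p_n .$$ (That is, the initialization formula expressing $\mathbf r_0$ through $\mathbf q_0,\mathbf p_0,h_0$ remains valid at every step of the iteration.)
   Context: The scheme is a discretization of the Kepler problem $\dot{\mathbf p}=-k\mathbf q/|\mathbf q|^3$, $\mathbf p=m\dot{\mathbf q}$ in $\mathbb{R}^3$. For a vector $\mathbf v$ write $v=|\mathbf v|$. Initialization: put $q_0=|\mathbf q_0|$, $$S_0=\frac{h_0\,\mathbf q_0\cdot\mathbf p_0}{m\,q_0},\qquad \mathbf r_0=\mathbf q_0+\frac{h_0}{2m}\Big(\frac{S_0}{q_0+\sqrt{q_0^2+S_0^2}}-1\Big)\mathbf p_0,\qquad \mathbf r_1=\mathbf r_0+\frac{h_0\mathbf p_0}{m},$$ and let $\delta\in[0,\pi/2)$ be defined by $\cos 2\delta=\dfrac{r_0^2+\mathbf r_0\cdot\mathbf P_0}{r_0\sqrt{r_0^2+2\mathbf r_0\cdot\mathbf P_0+\mathbf P_0^2}}$, where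 $\mathbf P_0=h_0\mathbf p_0/m$ (equivalently $\cos2\delta=\mathbf r_0\cdot\mathbf r_1/(r_0r_1)$). Iteration: for $n=0,1,2,\dots$, given $\mathbf r_n,\mathbf r_{n+1},\mathbf p_n,h_n$, define $$\mathbf p_{n+1}=\mathbf p_n-\frac{k h_n\,\mathbf r_{n+1}}{r_{n+1}^2 r_n\cos\delta},\qquad h_{n+1}=\frac{h_n}{\dfrac{2r_n\cos2\delta}{r_{n+1}}-1+\dfrac{k h_n^2}{m\,r_{n+1}^2 r_n\cos\delta}},$$ $$\mathbf r_{n+2}=\mathbf r_{n+1}+\frac{h_{n+1}\mathbf p_{n+1}}{m},\qquad \mathbf q_{n+1}=\frac{r_{n+2}\mathbf r_{n+1}+r_{n+1}\mathbf r_{n+2}}{r_{n+1}+r_{n+2}} .$$ The initial $\mathbf q_0$ is the given one. *)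

theory Defs
  imports "HOL-Analysis.Analysis"
begin

definition kS0 :: "real \<Rightarrow> real^3 \<Rightarrow> real^3 \<Rightarrow> real \<Rightarrow> real" where
  "kS0 m q0 p0 h0 = h0 * (q0 \<bullet> p0) / (m * norm q0)"

definition kr0 :: "real \<Rightarrow> real^3 \<Rightarrow> real^3 \<Rightarrow> real \<Rightarrow> real^3" where
  "kr0 m q0 p0 h0 = q0 + (h0 / (2 * m) *
      (kS0 m q0 p0 h0 / (norm q0 + sqrt ((norm q0)^2 + (kS0 m q0 p0 h0)^2)) - 1)) *\<^sub>R p0"

definition kr1 :: "real \<Rightarrow> real^3 \<Rightarrow> real^3 \<Rightarrow> real \<Rightarrow> real^3" where
  "kr1 m q0 p0 h0 = kr0 m q0 p0 h0 + (h0 / m) *\<^sub>R p0"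

definition kdelta :: "real \<Rightarrow> real^3 \<Rightarrow> real^3 \<Rightarrow> real \<Rightarrow> real" where
  "kdelta m q0 p0 h0 = arccos ((kr0 m q0 p0 h0 \<bullet> kr1 m q0 p0 h0)
        / (norm (kr0 m q0 p0 h0) * norm (kr1 m q0 p0 h0))) / 2"

text \<open>State at step n: (r_n, r_(n+1), p_n, h_n).\<close>
primrec kstate :: "real \<Rightarrow> real \<Rightarrow> real^3 \<Rightarrow> real^3 \<Rightarrow> real \<Rightarrow> nat
      \<Rightarrow> (real^3) \<times> (real^3) \<times> (real^3) \<times> real" where
  "kstate m k q0 p0 h0 0 = (kr0 m q0 p0 h0, kr1 m q0 p0 h0, p0, h0)"
| "kstate m k q0 p0 h0 (Suc n) =
     (let (a, b, p, h) = kstate m k q0 p0 h0 n;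
          d = kdelta m q0 p0 h0;
          p' = p - (k * h / ((norm b)^2 * norm a * cos d)) *\<^sub>R b;
          h' = h / (2 * norm a * cos (2 * d) / norm b - 1
                    + k * h^2 / (m * (norm b)^2 * norm a * cos d));
          b' = b + (h' / m) *\<^sub>R p'
      in (b, b', p', h'))"

definition kr :: "real \<Rightarrow> real \<Rightarrow> real^3 \<Rightarrow> real^3 \<Rightarrow> real \<Rightarrow> nat \<Rightarrow> real^3" where
  "kr m k q0 p0 h0 n = fst (kstate m k q0 p0 h0 n)"

definition kp :: "real \<Rightarrow> real \<Rightarrow> real^3 \<Rightarrow> real^3 \<Rightarrow> real \<Rightarrow> nat \<Rightarrow> real^3" where
  "kp m k q0 p0 h0 n = fst (snd (snd (kstate m k q0 p0 h0 n)))"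

definition kh :: "real \<Rightarrow> real \<Rightarrow> real^3 \<Rightarrow> real^3 \<Rightarrow> real \<Rightarrow> nat \<Rightarrow> real" where
  "kh m k q0 p0 h0 n = snd (snd (snd (kstate m k q0 p0 h0 n)))"

primrec kq :: "real \<Rightarrow> real \<Rightarrow> real^3 \<Rightarrow> real^3 \<Rightarrow> real \<Rightarrow> nat \<Rightarrow> real^3" where
  "kq m k q0 p0 h0 0 = q0"
| "kq m k q0 p0 h0 (Suc n) =
     (1 / (norm (kr m k q0 p0 h0 (Suc n)) + norm (kr m k q0 p0 h0 (Suc (Suc n))))) *\<^sub>R
     (norm (kr m k q0 p0 h0 (Suc (Suc n))) *\<^sub>R kr m k q0 p0 h0 (Suc n)
      + norm (kr m k q0 p0 h0 (Suc n)) *\<^sub>R kr m k q0 p0 h0 (Suc (Suc n)))"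

end

theory Submission
  imports Defs
begin

lemma kstep:
  "kr m k q0 p0 h0 (Suc (Suc n)) = kr m k q0 p0 h0 (Suc n) + (kh m k q0 p0 h0 (Suc n) / m) *\<^sub>R kp m k q0 p0 h0 (Suc n)"
proof -
  obtain a b p h where e: "kstate m k q0 p0 h0 n = (a, b, p, h)" by (metis prod.exhaust)
  show ?thesis by (simp add: kr_def kh_def kp_def e Let_def)
qed

lemma aux_div:
  fixes x y z N :: real
  assumes "y \<noteq> 0" "N \<noteq> 0"
  shows "x * (N^2 * y^2 / z) / y / N = x * y * N / z"
  using assms by (simp add: power2_eq_square field_simps)

lemma aux_div2:
  fixes x y z N :: real
  assumes "y \<noteq> 0" "N \<noteq> 0" "z \<noteq> 0"
  shows "x * y * N / z / (N * y^2 / z) = x / y"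
  using assms by (simp add: power2_eq_square field_simps)

lemma key:
  fixes a b q :: "'a::real_inner"
  assumes a0: "a \<noteq> 0" and b0: "b \<noteq> 0"
    and qd: "q = (1 / (norm a + norm b)) *\<^sub>R (norm b *\<^sub>R a + norm a *\<^sub>R b)"
    and q0: "q \<noteq> 0"
  shows "(q \<bullet> (b - a) / norm q) / (norm q + sqrt ((norm q)^2 + (q \<bullet> (b - a) / norm q)^2))
          = (norm b - norm a) / (norm a + norm b)"
proof -
  define A where "A = norm a"
  define B where "B = norm b"
  define d where "d = a \<bullet> b"
  define N where "N = norm q"
  have A: "A > 0" using a0 A_def by simp
  have B: "B > 0" using b0 B_def by simp
  have N: "N > 0" using q0 N_def by simp
  have aa: "a \<bullet> a = A^2" by (simp add: A_def dot_square_norm)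
  have bb: "b \<bullet> b = B^2" by (simp add: B_def dot_square_norm)
  have ba: "b \<bullet> a = d" by (simp add: d_def inner_commute)
  have qP: "q \<bullet> (b - a) = (B - A) * (A * B + d) / (A + B)"
  proof -
    have "q \<bullet> (b - a) = (1 / (A + B)) * ((B *\<^sub>R a + A *\<^sub>R b) \<bullet> (b - a))"
      unfolding qd A_def[symmetric] B_def[symmetric] by simp
    also have "(B *\<^sub>R a + A *\<^sub>R b) \<bullet> (b - a) = (B - A) * (A * B + d)"
      by (simp add: inner_simps aa bb ba d_def[symmetric] algebra_simps power2_eq_square)
    finally show ?thesis by simp
  qed
  have N2: "N^2 = 2 * A * B * (A * B + d) / (A + B)^2"
  proof -
    have "N^2 = q \<bullet> q" by (simp add: N_def dot_square_norm)
    also have "\<dots> = (1 / (A + B))^2 * ((B *\<^sub>R a + A *\<^sub>R b) \<bullet> (B *\<^sub>R a + A *\<^sub>R b))"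
      unfolding qd A_def[symmetric] B_def[symmetric] by (simp add: power2_eq_square)
    also have "(B *\<^sub>R a + A *\<^sub>R b) \<bullet> (B *\<^sub>R a + A *\<^sub>R b) = 2 * A * B * (A * B + d)"
      by (simp add: inner_simps aa bb ba d_def[symmetric] algebra_simps power2_eq_square)
    also have "(1 / (A + B))^2 * (2 * A * B * (A * B + d)) = 2 * A * B * (A * B + d) / (A + B)^2"
      by (simp add: power_divide)
    finally show ?thesis .
  qed
  have ABd: "A * B + d = N^2 * (A + B)^2 / (2 * A * B)"
    using N2 A B by (simp add: field_simps)
  define S where "S = q \<bullet> (b - a) / norm q"
  have S1: "S = (B - A) * (N^2 * (A + B)^2 / (2 * A * B)) / (A + B) / N"
    by (simp add: S_def N_def[symmetric] qP ABd[symmetric])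
  have S: "S = (B - A) * (A + B) * N / (2 * A * B)"
  proof -
    have AB: "A + B \<noteq> 0" using A B by linarith
    have "(B - A) * (N^2 * (A + B)^2 / (2 * A * B)) / (A + B) / N = (B - A) * (A + B) * N / (2 * A * B)"
      by (rule aux_div[OF AB]) (use N in simp)
    then show ?thesis unfolding S1 .
  qed
  have sq: "sqrt (N^2 + S^2) = N * (A^2 + B^2) / (2 * A * B)"
  proof (rule real_sqrt_unique)
    show "(N * (A^2 + B^2) / (2 * A * B))^2 = N^2 + S^2"
      unfolding S using A B by (simp add: field_simps power2_eq_square)
    show "0 \<le> N * (A^2 + B^2) / (2 * A * B)" using A B N by simp
  qed
  have "S / (N + sqrt (N^2 + S^2)) = (B - A) / (A + B)"
  proof -
    have den: "N + sqrt (N^2 + S^2) = N * (A + B)^2 / (2 * A * B)"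
      unfolding sq using A B by (simp add: field_simps power2_eq_square)
    have AB: "A + B > 0" using A B by linarith
    show ?thesis unfolding den unfolding S
      by (rule aux_div2) (use A B N AB in auto)
  qed
  then show ?thesis unfolding S_def N_def A_def B_def .
qed

theorem mainTheorem5:
  fixes m k h0 :: real and q0 p0 :: "real^3"
  defines "r \<equiv> kr m k q0 p0 h0" and "p \<equiv> kp m k q0 p0 h0"
      and "h \<equiv> kh m k q0 p0 h0" and "q \<equiv> kq m k q0 p0 h0"
      and "\<delta> \<equiv> kdelta m q0 p0 h0"
  assumes "m \<noteq> 0" and "q0 \<noteq> 0" and "h0 > 0"
    and wd_r: "\<forall>n. r n \<noteq> 0"
    and wd_cos: "cos \<delta> \<noteq> 0"
    and wd_h: "\<forall>n. 2 * norm (r n) * cos (2 * \<delta>) / norm (r (Suc n)) - 1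
                   + k * (h n)^2 / (m * (norm (r (Suc n)))^2 * norm (r n) * cos \<delta>) \<noteq> 0"
    and wd_q: "\<forall>n. q n \<noteq> 0"
  shows "\<forall>n. r n = q n + (h n / (2 * m) *
            ((h n * (q n \<bullet> p n) / (m * norm (q n)))
              / (norm (q n) + sqrt ((norm (q n))^2 + (h n * (q n \<bullet> p n) / (m * norm (q n)))^2))
             - 1)) *\<^sub>R p n"
proof
  fix n
  show "r n = q n + (h n / (2 * m) *
            ((h n * (q n \<bullet> p n) / (m * norm (q n)))
              / (norm (q n) + sqrt ((norm (q n))^2 + (h n * (q n \<bullet> p n) / (m * norm (q n)))^2))
             - 1)) *\<^sub>R p n"
  proof (cases n)
    case 0
    then show ?thesis
      by (simp add: r_def q_def h_def p_def kr_def kh_def kp_def kr0_def kS0_def)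
  next
    case (Suc j)
    define a where "a = r (Suc j)"
    define b where "b = r (Suc (Suc j))"
    define P where "P = (h (Suc j) / m) *\<^sub>R p (Suc j)"
    have bP: "b = a + P" unfolding a_def b_def P_def r_def h_def p_def by (rule kstep)
    have qd: "q (Suc j) = (1 / (norm a + norm b)) *\<^sub>R (norm b *\<^sub>R a + norm a *\<^sub>R b)"
      unfolding a_def b_def q_def r_def by simp
    have a0: "a \<noteq> 0" and b0: "b \<noteq> 0" using wd_r a_def b_def by auto
    have A: "norm a > 0" and B: "norm b > 0" using a0 b0 by auto
    have AB: "norm a + norm b > 0" using A B by linarith
    have K: "(q (Suc j) \<bullet> (b - a) / norm (q (Suc j))) / (norm (q (Suc j)) + sqrt ((norm (q (Suc j)))^2 + (q (Suc j) \<bullet> (b - a) / norm (q (Suc j)))^2))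
          = (norm b - norm a) / (norm a + norm b)"
      by (rule key[OF a0 b0 qd wd_q[rule_format]])
    have PP: "b - a = P" using bP by simp
    have S: "h (Suc j) * (q (Suc j) \<bullet> p (Suc j)) / (m * norm (q (Suc j))) = q (Suc j) \<bullet> (b - a) / norm (q (Suc j))"
      unfolding PP P_def by (simp add: inner_simps)
    have "q (Suc j) + (h (Suc j) / (2 * m) * ((norm b - norm a) / (norm a + norm b) - 1)) *\<^sub>R p (Suc j)
        = q (Suc j) + ((1/2) * ((norm b - norm a) / (norm a + norm b) - 1)) *\<^sub>R P"
      unfolding P_def by simp
    also have "\<dots> = a"
    proof -
      have "((1/2) * ((norm b - norm a) / (norm a + norm b) - 1)) = - norm a / (norm a + norm b)"
        using AB by (simp add: field_simps)
      define c where "c = 1 / (norm a + norm b)"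
      have "- norm a / (norm a + norm b) = c * (- norm a)" unfolding c_def by simp
      then have "q (Suc j) + ((1/2) * ((norm b - norm a) / (norm a + norm b) - 1)) *\<^sub>R P
          = c *\<^sub>R (norm b *\<^sub>R a + norm a *\<^sub>R b) + (c * (- norm a)) *\<^sub>R (b - a)"
        using \<open>(1/2) * _ = _\<close> unfolding qd PP c_def by simp
      also have "\<dots> = c *\<^sub>R (norm b *\<^sub>R a + norm a *\<^sub>R b - norm a *\<^sub>R (b - a))"
        by (simp add: algebra_simps)
      also have "norm b *\<^sub>R a + norm a *\<^sub>R b - norm a *\<^sub>R (b - a) = (norm a + norm b) *\<^sub>R a"
        by (simp add: algebra_simps)
      finally show ?thesis using AB unfolding c_def by simp
    qed
    finally have fin: "q (Suc j) + (h (Suc j) / (2 * m) * ((norm b - norm a) / (norm a + norm b) - 1)) *\<^sub>R p (Suc j) = a" .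
    show ?thesis unfolding Suc S K a_def[symmetric] using fin by simp
  qed
qed

end
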